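(* Let $p>0$, $\alpha:=2/(1+p)$, let $\mu_0$ be a probability measure on $\mathbb{R}$ and let $\mu(\cdot,t)$, $t\ge0$, be the probability measures corresponding to the solution of the inelastic Kac equation with initial datum $\mu_0$ (see context). If \[ \limsup_{x\to+\infty}x^\alpha(1-F^*_0(x))<+\infty, \] then the family $\{\mu(\cdot,t)\}_{t\geq0}$ is uniformly tight, i.e. for every $\varepsilon>0$ there is a bounded closed interval $I_\varepsilon\subset\mathbb{R}$ with $\inf_{t\geq0}\mu(I_\varepsilon,t)>1-\varepsilon$.
   Context: For $\theta\in(0,2\pi]$ put $c_p(\theta):=\cos\theta|\cos\theta|^p$, $s_p(\theta):=\sin\theta|\sin\theta|^p$. With $\varphi_0$ the characteristic function of $\mu_0$, the inelastic Kac equation is the Cauchy problem \[ \frac{\partial}{\partial t}\varphi(\xi,t)=\frac{1}{2\pi}\int_{0}^{2\pi}\varphi(\xi c_p(\theta),t)\varphi(\xi s_p(\theta),t)\,d\theta-\varphi(\xi,t)\ (t>0),\qquad \varphi(\xi,0^+)=\varphi_0(\xi), \] which has a unique solution in the class of characteristic functions of probability measures on $\mathbb{R}$; $\mu(\cdot,t)$ is the probability measure with characteristic function $\varphi(\cdot,t)$. With $F_0(x):=\mu_0((-\infty,x])$, $F_0^*$ denotes the distribution function with $F^*_0(x)=\frac12[F_0(x)+1-F_0(-x)]$ at continuity points $x$. *)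

theory Defs
  imports "HOL-Probability.Probability"
begin

definition cp :: "real \<Rightarrow> real \<Rightarrow> real" where
  "cp p \<theta> = cos \<theta> * \<bar>cos \<theta>\<bar> powr p"

definition sp :: "real \<Rightarrow> real \<Rightarrow> real" where
  "sp p \<theta> = sin \<theta> * \<bar>sin \<theta>\<bar> powr p"

text \<open>Distribution function of the symmetrized measure: the right-continuous
  F0* with F0*(x) = (F0(x) + 1 - F0(-x))/2 at continuity points.
  Here 1 - F0((-x)-) = mu0([-x, inf)).\<close>
definition sym_cdf :: "real measure \<Rightarrow> real \<Rightarrow> real" where
  "sym_cdf M x = (measure M {..x} + measure M {-x..}) / 2"

definition kac_solution :: "real \<Rightarrow> real measure \<Rightarrow> (real \<Rightarrow> real measure) \<Rightarrow> bool" where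
  "kac_solution p \<mu>0 \<mu> \<longleftrightarrow>
     (\<forall>t\<ge>0. real_distribution (\<mu> t)) \<and> \<mu> 0 = \<mu>0 \<and>
     (\<forall>\<xi> t. t > 0 \<longrightarrow>
        ((\<lambda>s. char (\<mu> s) \<xi>) has_vector_derivative
           (complex_of_real (1 / (2 * pi)) *
              integral {0..2*pi} (\<lambda>\<theta>. char (\<mu> t) (\<xi> * cp p \<theta>) * char (\<mu> t) (\<xi> * sp p \<theta>))
            - char (\<mu> t) \<xi>)) (at t)) \<and>
     (\<forall>\<xi>. ((\<lambda>s. char (\<mu> s) \<xi>) \<longlongrightarrow> char \<mu>0 \<xi>) (at_right 0))"

end

theory Submission
  imports Defs
begin


lemma abs_cp_powr:
  assumes "p > 0"
  shows "\<bar>cp p \<theta>\<bar> powr (2 / (1 + p)) = (cos \<theta>)\<^sup>2"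
proof -
  have "\<bar>cp p \<theta>\<bar> = \<bar>cos \<theta>\<bar> powr (1 + p)"
    unfolding cp_def by (simp add: abs_mult powr_add)
  hence "\<bar>cp p \<theta>\<bar> powr (2 / (1 + p)) = \<bar>cos \<theta>\<bar> powr ((1 + p) * (2 / (1 + p)))"
    by (simp only: powr_powr)
  also have "(1 + p) * (2 / (1 + p)) = 2" using assms by (simp add: field_simps)
  finally have "\<bar>cp p \<theta>\<bar> powr (2 / (1 + p)) = \<bar>cos \<theta>\<bar> powr 2" .
  also have "\<dots> = (cos \<theta>)\<^sup>2" by simp
  finally show ?thesis .
qed

lemma abs_sp_powr:
  assumes "p > 0"
  shows "\<bar>sp p \<theta>\<bar> powr (2 / (1 + p)) = (sin \<theta>)\<^sup>2"
proof -
  have "\<bar>sp p \<theta>\<bar> = \<bar>sin \<theta>\<bar> powr (1 + p)"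
    unfolding sp_def by (simp add: abs_mult powr_add)
  hence "\<bar>sp p \<theta>\<bar> powr (2 / (1 + p)) = \<bar>sin \<theta>\<bar> powr ((1 + p) * (2 / (1 + p)))"
    by (simp only: powr_powr)
  also have "(1 + p) * (2 / (1 + p)) = 2" using assms by (simp add: field_simps)
  finally have "\<bar>sp p \<theta>\<bar> powr (2 / (1 + p)) = \<bar>sin \<theta>\<bar> powr 2" .
  also have "\<dots> = (sin \<theta>)\<^sup>2" by simp
  finally show ?thesis .
qed

lemma cp_reflect: "cp p (2*pi - \<theta>) = cp p \<theta>"
  unfolding cp_def by simp
lemma sp_reflect: "sp p (2*pi - \<theta>) = - sp p \<theta>"
  unfolding sp_def by simp

lemma continuous_on_cp: "p > 0 \<Longrightarrow> continuous_on S (cp p)"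
  unfolding cp_def
  by (intro continuous_on_mult continuous_on_cos continuous_on_id continuous_on_powr' continuous_intros) auto
lemma continuous_on_sp: "p > 0 \<Longrightarrow> continuous_on S (sp p)"
  unfolding sp_def
  by (intro continuous_on_mult continuous_on_sin continuous_on_id continuous_on_powr' continuous_intros) auto

lemma char_uminus: "char M (- x) = cnj (char M x)"
proof -
  have "cnj (char M x) = (CLINT y|M. cnj (iexp (x * y)))"
    unfolding char_def by simp
  also have "\<dots> = char M (-x)"
    unfolding char_def by (rule Bochner_Integration.integral_cong) (auto simp: exp_cnj)
  finally show ?thesis by simp
qed

lemma (in real_distribution) Re_char_le_1: "Re (char M x) \<le> 1"
  using cmod_char_le_1[of x] abs_Re_le_cmod[of "char M x"] by linarith

lemma (in real_distribution) Re_char_ge: "- 1 \<le> Re (char M x)"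
  using cmod_char_le_1[of x] abs_Re_le_cmod[of "char M x"] by linarith



lemma char_main_bound:
  assumes M: "real_distribution M" and "u > 0"
  shows "u * measure M {x. abs x \<ge> 2 / u} \<le> Re (CLBINT t:{-u..u}. 1 - char M t)"
proof -
  interpret Mn: real_distribution M by fact
  have *: "\<And>u x. u > 0 \<Longrightarrow> x \<noteq> 0 \<Longrightarrow> (CLBINT t:{-u..u}. 1 - iexp (t * x)) =
      2 * (u  - sin (u * x) / x)"
  proof -
    fix u :: real and x :: real
    assume "u > 0" and "x \<noteq> 0"
    hence "(CLBINT t:{-u..u}. 1 - iexp (t * x)) = (CLBINT t=-u..u. 1 - iexp (t * x))"
      by (subst interval_integral_Icc, auto)
    also have "\<dots> = (CLBINT t=-u..ereal 0. 1 - iexp (t * x)) + (CLBINT t= ereal 0..u. 1 - iexp (t * x))"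
      using \<open>u > 0\<close>
      by (subst interval_integral_sum; force simp add: interval_integrable_isCont)
    also have "\<dots> = (CLBINT t=ereal 0..u. 1 - iexp (t * -x)) + (CLBINT t=ereal 0..u. 1 - iexp (t * x))"
      by (subst interval_integral_reflect, auto)
    also have "... = CLBINT xa=ereal 0..ereal u. 1 - iexp (xa * - x) + (1 - iexp (xa * x))"
      by (subst interval_lebesgue_integral_add (2) [symmetric]) (auto simp: interval_integrable_isCont)
    also have "\<dots> = (LBINT t=ereal 0..u. 2 - 2 * cos (t * x))"
      unfolding exp_Euler cos_of_real by (simp flip: interval_lebesgue_integral_of_real)
    also have "\<dots> = 2 * u - 2 * sin (u * x) / x"
      by (subst interval_lebesgue_integral_diff)
         (auto intro!: interval_integrable_isCont
               simp: interval_lebesgue_integral_of_real integral_cos [OF \<open>x \<noteq> 0\<close>] mult.commute[of _ x])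
    finally show "(CLBINT t:{-u..u}. 1 - iexp (t * x)) = 2 * (u  - sin (u * x) / x)"
      by (simp add: field_simps)
  qed
  interpret P: pair_sigma_finite "M" lborel ..
  have Mn1 [simp]: "measure M UNIV = 1" by (metis Mn.prob_space Mn.space_eq_univ)
  have Mn2 [simp]: "\<And>x. complex_integrable M (\<lambda>t. exp (\<i> * complex_of_real (x * t)))"
    by (rule Mn.integrable_const_bound [where B = 1], auto)
  have Mn3: "set_integrable (M \<Otimes>\<^sub>M lborel) (UNIV \<times> {- u..u}) (\<lambda>a. 1 - exp (\<i> * complex_of_real (snd a * fst a)))"
    using \<open>0 < u\<close>
    unfolding set_integrable_def
    by (intro integrableI_bounded_set_indicator [where B="2"])
       (auto simp: lborel.emeasure_pair_measure_Times ennreal_mult_less_top not_less top_unique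
             split: split_indicator
             intro!: order_trans [OF norm_triangle_ineq4])
  have "(CLBINT t:{-u..u}. 1 - char M t) =
      (CLBINT t:{-u..u}. (CLINT x | M. 1 - iexp (t * x)))"
    unfolding char_def by (rule set_lebesgue_integral_cong, auto simp del: of_real_mult)
  also have "\<dots> = (CLBINT t. (CLINT x | M. indicator {-u..u} t *\<^sub>R (1 - iexp (t * x))))"
    unfolding set_lebesgue_integral_def
    by (rule Bochner_Integration.integral_cong) (auto split: split_indicator)
  also have "\<dots> = (CLINT x | M. (CLBINT t:{-u..u}. 1 - iexp (t * x)))"
    using Mn3 by (subst P.Fubini_integral) (auto simp: indicator_times split_beta' set_integrable_def set_lebesgue_integral_def)
  also have "\<dots> = (CLINT x | M. (if x = 0 then 0 else 2 * (u  - sin (u * x) / x)))"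
    using \<open>u > 0\<close> by (intro Bochner_Integration.integral_cong, auto simp add: * simp del: of_real_mult)
  also have "\<dots> = (LINT x | M. (if x = 0 then 0 else 2 * (u  - sin (u * x) / x)))"
    by (rule integral_complex_of_real)
  finally have "Re (CLBINT t:{-u..u}. 1 - char M t) =
     (LINT x | M. (if x = 0 then 0 else 2 * (u  - sin (u * x) / x)))" by simp
  also have "\<dots> \<ge> (LINT x : {x. abs x \<ge> 2 / u} | M. u)"
  proof -
    have "complex_integrable M (\<lambda>x. CLBINT t:{-u..u}. 1 - iexp (snd (x, t) * fst (x, t)))"
      using Mn3 unfolding set_integrable_def set_lebesgue_integral_def
      by (intro P.integrable_fst) (simp add: indicator_times split_beta')
    hence "complex_integrable M (\<lambda>x. if x = 0 then 0 else 2 * (u  - sin (u * x) / x))"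
      using \<open>u > 0\<close>
      unfolding set_integrable_def
      by (subst Bochner_Integration.integrable_cong) (auto simp add: * simp del: of_real_mult)
    hence **: "integrable M (\<lambda>x. if x = 0 then 0 else 2 * (u  - sin (u * x) / x))"
      unfolding complex_of_real_integrable_eq .
    have "2 * sin x \<le> x" if "2 \<le> x" for x :: real
      by (rule order_trans[OF _ \<open>2 \<le> x\<close>]) auto
    moreover have "x \<le> 2 * sin x" if "x \<le> - 2" for x :: real
      by (rule order_trans[OF \<open>x \<le> - 2\<close>]) auto
    moreover have "x < 0 \<Longrightarrow> x \<le> sin x" for x :: real
      using sin_x_le_x[of "-x"] by simp
    ultimately show ?thesis
      using \<open>u > 0\<close> unfolding set_lebesgue_integral_def
      by (intro integral_mono [OF _ **])
         (auto simp: divide_simps sin_x_le_x mult.commute[of u] mult_neg_pos top_unique less_top[symmetric]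
               split: split_indicator)
  qed
  also (xtrans) have "(LINT x : {x. abs x \<ge> 2 / u} | M. u) = u * measure M {x. abs x \<ge> 2 / u}"
    unfolding set_lebesgue_integral_def
    by (simp add: Mn.emeasure_eq_measure)
  finally show ?thesis .
qed

lemma tail_from_char:
  assumes M: "real_distribution M" and u: "u > 0" and K: "K \<ge> 0" and a: "a \<ge> 0"
    and bnd: "\<And>t. 1 - Re (char M t) \<le> K * \<bar>t\<bar> powr a"
  shows "measure M {x. abs x \<ge> 2 / u} \<le> 2 * K * u powr a"
proof -
  interpret Mn: real_distribution M by fact
  have cont: "continuous_on {-u..u} (\<lambda>t. 1 - char M t)"
    by (intro continuous_at_imp_continuous_on ballI continuous_intros Mn.isCont_char)
  have int: "integrable lborel (\<lambda>t. indicator {-u..u} t *\<^sub>R (1 - char M t))"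
    by (rule borel_integrable_compact[OF compact_Icc cont])
  have "Re (CLBINT t:{-u..u}. 1 - char M t) = (LBINT t:{-u..u}. 1 - Re (char M t))"
    unfolding set_lebesgue_integral_def using int
    by (simp add: integral_Re[symmetric] del: integral_Re)
  also have "\<dots> \<le> (LBINT t:{-u..u}. K * u powr a)"
  proof (rule set_integral_mono)
    show "set_integrable lborel {- u..u} (\<lambda>t. 1 - Re (char M t))"
      by (rule borel_integrable_atLeastAtMost') (intro continuous_at_imp_continuous_on ballI continuous_intros Mn.isCont_char)
    show "set_integrable lborel {- u..u} (\<lambda>t. K * u powr a)"
      by (rule borel_integrable_atLeastAtMost') (intro continuous_intros)
    fix t assume "t \<in> {-u..u}"
    hence "\<bar>t\<bar> powr a \<le> u powr a" using a by (auto intro!: powr_mono2)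
    thus "1 - Re (char M t) \<le> K * u powr a"
      using bnd[of t] K by (meson mult_left_mono order_trans)
  qed
  also have "\<dots> = 2 * u * (K * u powr a)"
    using u by (simp add: set_integral_const)
  finally have "u * measure M {x. abs x \<ge> 2 / u} \<le> u * (2 * K * u powr a)"
    using char_main_bound[OF M u] by (simp add: algebra_simps)
  thus ?thesis using u by simp
qed



lemma tail_bound:
  assumes M: "real_distribution M"
    and lim: "Limsup at_top (\<lambda>x. ereal (x powr a * (1 - sym_cdf M x))) < \<infinity>"
  shows "\<exists>C x0. C \<ge> 0 \<and> x0 > 0 \<and> (\<forall>x\<ge>x0. measure M {y. x < \<bar>y\<bar>} \<le> C * x powr (-a))"
proof -
  interpret Mn: real_distribution M by fact
  obtain c where c: "Limsup at_top (\<lambda>x. ereal (x powr a * (1 - sym_cdf M x))) < ereal c"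
    using ereal_dense2[OF lim] by blast
  have "eventually (\<lambda>x. ereal (x powr a * (1 - sym_cdf M x)) < ereal c) at_top"
    by (rule Limsup_lessD[OF c])
  then obtain N where N: "\<And>x. x \<ge> N \<Longrightarrow> x powr a * (1 - sym_cdf M x) < c"
    unfolding eventually_at_top_linorder by auto
  define x0 where "x0 = max N 1"
  have "\<forall>x\<ge>x0. measure M {y. x < \<bar>y\<bar>} \<le> max (2*c) 0 * x powr (-a)"
  proof (intro allI impI)
    fix x assume x: "x \<ge> x0"
    hence xpos: "x > 0" and xN: "x \<ge> N" unfolding x0_def by auto
    have un: "{y. x < \<bar>y\<bar>} = {x<..} \<union> {..<-x}" using xpos by auto
    have m1: "measure M {y. x < \<bar>y\<bar>} = measure M {x<..} + measure M {..<-x}"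
      unfolding un using xpos by (intro Mn.finite_measure_Union) auto
    have c1: "measure M {..x} = 1 - measure M {x<..}"
    proof -
      have "UNIV - {x<..} = {..x}" by auto
      thus ?thesis using Mn.prob_compl[of "{x<..}"] by simp
    qed
    have c2: "measure M {-x..} = 1 - measure M {..<-x}"
    proof -
      have "UNIV - {..<-x} = {-x..}" by auto
      thus ?thesis using Mn.prob_compl[of "{..<-x}"] by simp
    qed
    have eq: "measure M {y. x < \<bar>y\<bar>} = 2 * (1 - sym_cdf M x)"
      unfolding m1 sym_cdf_def c1 c2 by (simp add: field_simps)
    have "x powr a * (measure M {y. x < \<bar>y\<bar>}) < 2 * c"
      using N[OF xN] unfolding eq by (simp add: algebra_simps)
    hence "measure M {y. x < \<bar>y\<bar>} < 2 * c * x powr (-a)"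
      using xpos by (simp add: powr_minus field_simps)
    also have "\<dots> \<le> max (2*c) 0 * x powr (-a)"
      by (intro mult_right_mono) auto
    finally show "measure M {y. x < \<bar>y\<bar>} \<le> max (2*c) 0 * x powr (-a)" by simp
  qed
  moreover have "x0 > 0" unfolding x0_def by auto
  ultimately show ?thesis by (intro exI[of _ "max (2*c) 0"] exI[of _ x0]) auto
qed



lemma W_step:
  assumes M: "real_distribution M" and s: "s > 0"
  shows "(LINT y|M. min (y\<^sup>2) (s\<^sup>2)) \<le> (LINT y|M. min (y\<^sup>2) ((s/2)\<^sup>2)) + s\<^sup>2 * measure M {y. s/2 < \<bar>y\<bar>}"
proof -
  interpret Mn: real_distribution M by fact
  have i1: "integrable M (\<lambda>y. min (y\<^sup>2) (t\<^sup>2))" for t :: real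
    by (rule Mn.integrable_const_bound[where B="t\<^sup>2"]) auto
  have i2: "integrable M (\<lambda>y. s\<^sup>2 * indicator {y. s/2 < \<bar>y\<bar>} y)"
    by (rule Mn.integrable_const_bound[where B="s\<^sup>2"]) (auto split: split_indicator)
  have "(LINT y|M. min (y\<^sup>2) (s\<^sup>2)) \<le> (LINT y|M. min (y\<^sup>2) ((s/2)\<^sup>2) + s\<^sup>2 * indicator {y. s/2 < \<bar>y\<bar>} y)"
  proof (rule integral_mono)
    show "integrable M (\<lambda>y. min (y\<^sup>2) (s\<^sup>2))" by (rule i1)
    show "integrable M (\<lambda>y. min (y\<^sup>2) ((s/2)\<^sup>2) + s\<^sup>2 * indicator {y. s/2 < \<bar>y\<bar>} y)"
      using i1 i2 by (rule Bochner_Integration.integrable_add)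
    fix y :: real
    show "min (y\<^sup>2) (s\<^sup>2) \<le> min (y\<^sup>2) ((s/2)\<^sup>2) + s\<^sup>2 * indicator {y. s/2 < \<bar>y\<bar>} y"
    proof (cases "s/2 < \<bar>y\<bar>")
      case True
      have "min (y\<^sup>2) ((s/2)\<^sup>2) \<ge> 0" by simp
      thus ?thesis using True by (simp add: min_def)
    next
      case False
      hence "y\<^sup>2 \<le> (s/2)\<^sup>2" using s by (simp add: abs_le_square_iff[symmetric])
      moreover have "(s/2)\<^sup>2 \<le> s\<^sup>2" using s by (simp add: power_divide)
      ultimately show ?thesis using False by (simp add: min_def)
    qed
  qed
  also have "\<dots> = (LINT y|M. min (y\<^sup>2) ((s/2)\<^sup>2)) + s\<^sup>2 * measure M {y. s/2 < \<bar>y\<bar>}"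
    using i1 i2 by (simp add: Bochner_Integration.integral_add)
  finally show ?thesis .
qed



lemma W_le_sq:
  assumes M: "real_distribution M"
  shows "(LINT y|M. min (y\<^sup>2) (s\<^sup>2)) \<le> s\<^sup>2"
proof -
  interpret Mn: real_distribution M by fact
  have "(LINT y|M. min (y\<^sup>2) (s\<^sup>2)) \<le> (LINT y|M. s\<^sup>2)"
    by (rule integral_mono) (auto intro: Mn.integrable_const_bound[where B="s\<^sup>2"])
  thus ?thesis using Mn.prob_space Mn.space_eq_univ by simp
qed

lemma W_bound:
  assumes M: "real_distribution M" and a: "0 < a" "a < 2" and C: "C \<ge> 0" and x0: "x0 > 0"
    and tail: "\<And>x. x \<ge> x0 \<Longrightarrow> measure M {y. x < \<bar>y\<bar>} \<le> C * x powr (-a)"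
  shows "\<exists>A\<ge>0. \<forall>s\<ge>x0. (LINT y|M. min (y\<^sup>2) (s\<^sup>2)) \<le> A * s powr (2 - a)"
proof -
  define W where "W s = (LINT y|M. min (y\<^sup>2) (s\<^sup>2))" for s
  define q :: real where "q = 2 powr (a - 2)"
  have q1: "q < 1" unfolding q_def using a by (simp add: powr_less_one)
  have q0: "q > 0" unfolding q_def by simp
  define A where "A = max ((2*x0) powr a) (C * 2 powr a / (1 - q))"
  have A0: "A \<ge> 0" unfolding A_def by (simp add: le_max_iff_disj)
  have base: "W s \<le> A * s powr (2 - a)" if "x0 \<le> s" "s \<le> 2 * x0" for s
  proof -
    have sp: "s > 0" using that x0 by simp
    have "W s \<le> s\<^sup>2" unfolding W_def by (rule W_le_sq[OF M])
    also have "s\<^sup>2 = s powr a * s powr (2 - a)"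
      using sp by (simp add: powr_add[symmetric] powr_numeral)
    also have "\<dots> \<le> A * s powr (2 - a)"
    proof (rule mult_right_mono)
      have "s powr a \<le> (2*x0) powr a" using that sp a by (intro powr_mono2) auto
      thus "s powr a \<le> A" unfolding A_def by simp
    qed simp
    finally show ?thesis .
  qed
  have ind: "\<forall>s. x0 \<le> s \<and> s \<le> x0 * 2^n \<longrightarrow> W s \<le> A * s powr (2 - a)" for n
  proof (induction n)
    case 0
    then show ?case using base x0 by auto
  next
    case (Suc n)
    show ?case
    proof (intro allI impI)
      fix s assume s: "x0 \<le> s \<and> s \<le> x0 * 2 ^ Suc n"
      show "W s \<le> A * s powr (2 - a)"
      proof (cases "s \<le> 2 * x0")
        case True thus ?thesis using base s by auto
      next
        case False
        have sp: "s > 0" using s x0 by simp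
        have h1: "x0 \<le> s/2 \<and> s/2 \<le> x0 * 2^n" using False s by simp
        have "W s \<le> W (s/2) + s\<^sup>2 * measure M {y. s/2 < \<bar>y\<bar>}"
          unfolding W_def by (rule W_step[OF M sp])
        also have "\<dots> \<le> A * (s/2) powr (2 - a) + s\<^sup>2 * (C * (s/2) powr (-a))"
          using Suc.IH h1 tail[of "s/2"] by (intro add_mono mult_left_mono) auto
        also have "(s/2) powr (2 - a) = s powr (2 - a) * q"
          unfolding q_def using sp by (simp add: powr_divide powr_diff)
        also have "s\<^sup>2 * (C * (s/2) powr (-a)) = s powr (2 - a) * (C * 2 powr a)"
        proof -
          have "(s/2) powr (-a) = s powr (-a) * 2 powr a"
            using sp by (simp add: powr_divide powr_minus divide_simps)
          moreover have "s\<^sup>2 * s powr (-a) = s powr (2 - a)"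
          proof -
            have "s powr (2 - a) = s powr 2 * s powr (-a)"
              by (simp add: powr_add[symmetric])
            also have "s powr 2 = s\<^sup>2" using sp by simp
            finally show ?thesis by simp
          qed
          ultimately show ?thesis by (simp add: algebra_simps)
        qed
        also have "A * (s powr (2 - a) * q) + s powr (2 - a) * (C * 2 powr a)
                 = s powr (2 - a) * (A * q + C * 2 powr a)" by (simp add: algebra_simps)
        also have "\<dots> \<le> s powr (2 - a) * A"
        proof (rule mult_left_mono)
          have "C * 2 powr a / (1 - q) \<le> A" unfolding A_def by simp
          hence "C * 2 powr a \<le> A * (1 - q)" using q1 by (simp add: divide_simps)
          thus "A * q + C * 2 powr a \<le> A" by (simp add: algebra_simps)
        qed simp
        finally show ?thesis by (simp add: mult.commute)
      qed
    qed
  qed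
  have "\<forall>s\<ge>x0. W s \<le> A * s powr (2 - a)"
  proof (intro allI impI)
    fix s assume s: "s \<ge> x0"
    obtain n where "s / x0 < 2 ^ n" using real_arch_pow[of 2 "s/x0"] by auto
    hence "s \<le> x0 * 2 ^ n" using x0 by (simp add: field_simps)
    thus "W s \<le> A * s powr (2 - a)" using ind[of n] s by auto
  qed
  thus ?thesis using A0 unfolding W_def by blast
qed



lemma one_minus_cos_le: "1 - cos (u::real) \<le> u\<^sup>2 / 2"
proof -
  have "cos u = 1 - 2 * sin (u/2) ^ 2" using cos_double_sin[of "u/2"] by simp
  moreover have "sin (u/2) ^ 2 \<le> (u/2)^2"
    using abs_sin_x_le_abs_x[of "u/2"] by (simp add: abs_le_square_iff[symmetric])
  ultimately show ?thesis by (simp add: power_divide)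
qed

lemma (in real_distribution) Re_char_eq: "1 - Re (char M t) = (LINT y|M. 1 - cos (t * y))"
proof -
  have int: "complex_integrable M (\<lambda>y. iexp (t * y))"
    by (rule integrable_const_bound [where B = 1], auto)
  have "Re (char M t) = (LINT y|M. Re (iexp (t * y)))"
    unfolding char_def by (rule integral_Re[OF int, symmetric])
  also have "\<dots> = (LINT y|M. cos (t * y))"
    by (rule Bochner_Integration.integral_cong) (auto simp: Re_exp)
  finally have "Re (char M t) = (LINT y|M. cos (t * y))" .
  moreover have "(LINT y|M. 1 - cos (t * y)) = 1 - (LINT y|M. cos (t * y))"
    by (subst Bochner_Integration.integral_diff) (auto intro!: integrable_const_bound[where B=1] simp: prob_space[unfolded space_eq_univ])
  ultimately show ?thesis by simp
qed

lemma init_bound: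
  assumes M: "real_distribution M" and a: "0 < a" "a < 2"
    and lim: "Limsup at_top (\<lambda>x. ereal (x powr a * (1 - sym_cdf M x))) < \<infinity>"
  shows "\<exists>K\<ge>0. \<forall>\<xi>. 1 - Re (char M \<xi>) \<le> K * \<bar>\<xi>\<bar> powr a"
proof -
  interpret Mn: real_distribution M by fact
  obtain C x0 where C: "C \<ge> 0" and x0: "x0 > 0"
    and tail: "\<And>x. x\<ge>x0 \<Longrightarrow> measure M {y. x < \<bar>y\<bar>} \<le> C * x powr (-a)"
    using tail_bound[OF M lim] by blast
  obtain A where A: "A \<ge> 0" and WA: "\<And>s. s \<ge> x0 \<Longrightarrow> (LINT y|M. min (y\<^sup>2) (s\<^sup>2)) \<le> A * s powr (2 - a)"
    using W_bound[OF M a C x0 tail] by blast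
  define K where "K = max (A * 2 powr (2 - a) / 2) (2 * (x0/2) powr a)"
  have K0: "K \<ge> 0" unfolding K_def using A by (simp add: le_max_iff_disj)
  have "1 - Re (char M \<xi>) \<le> K * \<bar>\<xi>\<bar> powr a" for \<xi>
  proof (cases "\<xi> = 0")
    case True thus ?thesis using Mn.char_zero by simp
  next
    case False
    hence xp: "\<bar>\<xi>\<bar> > 0" by simp
    show ?thesis
    proof (cases "2 / \<bar>\<xi>\<bar> < x0")
      case True
      hence "2 / x0 < \<bar>\<xi>\<bar>" using xp x0 by (simp add: field_simps)
      hence "(2 / x0) powr a \<le> \<bar>\<xi>\<bar> powr a" using a x0 by (intro powr_mono2) auto
      hence "2 * (x0/2) powr a * (2 / x0) powr a \<le> 2 * (x0/2) powr a * \<bar>\<xi>\<bar> powr a"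
        by (intro mult_left_mono) auto
      moreover have "(x0/2) powr a * (2 / x0) powr a = 1"
        using x0 by (simp add: powr_mult[symmetric])
      ultimately have "2 \<le> 2 * (x0/2) powr a * \<bar>\<xi>\<bar> powr a" by simp
      also have "\<dots> \<le> K * \<bar>\<xi>\<bar> powr a" unfolding K_def by (intro mult_right_mono) auto
      finally show ?thesis using Mn.Re_char_ge[of \<xi>] by linarith
    next
      case False
      hence s0: "2 / \<bar>\<xi>\<bar> \<ge> x0" by simp
      have "1 - Re (char M \<xi>) = (LINT y|M. 1 - cos (\<xi> * y))" by (rule Mn.Re_char_eq)
      also have "\<dots> \<le> (LINT y|M. \<xi>\<^sup>2 / 2 * min (y\<^sup>2) ((2 / \<bar>\<xi>\<bar>)\<^sup>2))"
      proof (rule integral_mono)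
        show "integrable M (\<lambda>y. 1 - cos (\<xi> * y))"
          by (rule Mn.integrable_const_bound[where B=2]) auto
        show "integrable M (\<lambda>y. \<xi>\<^sup>2 / 2 * min (y\<^sup>2) ((2 / \<bar>\<xi>\<bar>)\<^sup>2))"
          by (intro integrable_mult_right Mn.integrable_const_bound[where B="(2 / \<bar>\<xi>\<bar>)\<^sup>2"]) auto
        fix y
        have e: "\<xi>\<^sup>2 / 2 * min (y\<^sup>2) ((2 / \<bar>\<xi>\<bar>)\<^sup>2) = min ((\<xi> * y)\<^sup>2 / 2) 2"
          using xp by (simp add: min_mult_distrib_left power_mult_distrib power_divide field_simps)
        have "1 - cos (\<xi> * y) \<le> (\<xi> * y)\<^sup>2 / 2" by (rule one_minus_cos_le)
        moreover have "1 - cos (\<xi> * y) \<le> 2" using cos_ge_minus_one[of "\<xi> * y"] by linarith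
        ultimately show "1 - cos (\<xi> * y) \<le> \<xi>\<^sup>2 / 2 * min (y\<^sup>2) ((2 / \<bar>\<xi>\<bar>)\<^sup>2)"
          unfolding e by simp
      qed
      also have "\<dots> = \<xi>\<^sup>2 / 2 * (LINT y|M. min (y\<^sup>2) ((2 / \<bar>\<xi>\<bar>)\<^sup>2))" by simp
      also have "\<dots> \<le> \<xi>\<^sup>2 / 2 * (A * (2 / \<bar>\<xi>\<bar>) powr (2 - a))"
        using WA[OF s0] by (intro mult_left_mono) auto
      also have "\<dots> = A * 2 powr (2 - a) / 2 * \<bar>\<xi>\<bar> powr a"
      proof -
        have "(2 / \<bar>\<xi>\<bar>) powr (2 - a) = 2 powr (2 - a) / \<bar>\<xi>\<bar> powr (2 - a)"
          by (simp add: powr_divide)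
        moreover have "\<xi>\<^sup>2 = \<bar>\<xi>\<bar> powr (2 - a) * \<bar>\<xi>\<bar> powr a"
          using xp by (simp add: powr_add[symmetric])
        ultimately show ?thesis using xp by (simp add: field_simps)
      qed
      also have "\<dots> \<le> K * \<bar>\<xi>\<bar> powr a" unfolding K_def by (intro mult_right_mono) auto
      finally show ?thesis .
    qed
  qed
  thus ?thesis using K0 by blast
qed



lemma reflect_2pi:
  assumes "(f has_integral I) {0..2*pi}"
  shows "((\<lambda>\<theta>. f (2*pi - \<theta>)) has_integral I) {0..2*pi}"
proof -
  have "((\<lambda>x. f ((-1) *\<^sub>R x + 2*pi)) has_integral (1 / (\<bar>-1\<bar> ^ DIM(real))) *\<^sub>R I)
          ((\<lambda>x. (1 / (-1)) *\<^sub>R x + -((1 / (-1)) *\<^sub>R (2*pi))) ` cbox 0 (2*pi))"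
    by (rule has_integral_affinity) (use assms in auto)
  moreover have "(\<lambda>x::real. (1 / (-1)) *\<^sub>R x + -((1 / (-1)) *\<^sub>R (2*pi))) ` cbox 0 (2*pi) = {0..2*pi}"
  proof -
    have "(\<lambda>x::real. (1 / (-1)) *\<^sub>R x + -((1 / (-1)) *\<^sub>R (2*pi))) = (\<lambda>x. (-1) *\<^sub>R x + 2*pi)"
      by auto
    thus ?thesis by (simp add: image_affinity_interval)
  qed
  ultimately show ?thesis by simp
qed

lemma gain_bound:
  assumes p: "p > 0" and N: "real_distribution N" and B: "B \<ge> 0"
    and H: "\<And>\<eta>. 1 - Re (char N \<eta>) - K * \<bar>\<eta>\<bar> powr (2 / (1 + p)) \<le> B"
  shows "1 - K * \<bar>\<xi>\<bar> powr (2 / (1 + p)) - 2 * B \<le>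
    Re (complex_of_real (1 / (2 * pi)) *
              integral {0..2*pi} (\<lambda>\<theta>. char N (\<xi> * cp p \<theta>) * char N (\<xi> * sp p \<theta>)))"
proof -
  interpret Nd: real_distribution N by fact
  define \<alpha> where "\<alpha> = 2 / (1 + p)"
  define f where "f \<theta> = char N (\<xi> * cp p \<theta>) * char N (\<xi> * sp p \<theta>)" for \<theta>
  define I where "I = integral {0..2*pi} f"
  have cc: "continuous_on UNIV (char N)"
    by (intro continuous_at_imp_continuous_on ballI Nd.isCont_char)
  have contf: "continuous_on {0..2*pi} f"
    unfolding f_def
    by (intro continuous_on_mult continuous_on_compose2[OF cc] continuous_on_cp[OF p] continuous_on_sp[OF p]
          continuous_intros) auto
  have hI: "(f has_integral I) {0..2*pi}"
    unfolding I_def by (rule integrable_integral[OF integrable_continuous_real[OF contf]])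
  have hI2: "((\<lambda>\<theta>. f (2*pi - \<theta>)) has_integral I) {0..2*pi}"
    by (rule reflect_2pi[OF hI])
  have "((\<lambda>\<theta>. Re (f \<theta>) + Re (f (2*pi - \<theta>))) has_integral (Re I + Re I)) {0..2*pi}"
    by (intro has_integral_add has_integral_Re hI hI2)
  moreover have "Re (f \<theta>) + Re (f (2*pi - \<theta>)) = 2 * Re (char N (\<xi> * cp p \<theta>)) * Re (char N (\<xi> * sp p \<theta>))" for \<theta>
    unfolding f_def cp_reflect sp_reflect
    by (simp add: char_uminus[of N "\<xi> * sp p \<theta>", simplified] algebra_simps)
  ultimately have hR: "((\<lambda>\<theta>. 2 * Re (char N (\<xi> * cp p \<theta>)) * Re (char N (\<xi> * sp p \<theta>))) has_integral (2 * Re I)) {0..2*pi}"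
    by simp
  define c where "c = 1 - K * \<bar>\<xi>\<bar> powr \<alpha> - 2 * B"
  have pw: "2 * c \<le> 2 * Re (char N (\<xi> * cp p \<theta>)) * Re (char N (\<xi> * sp p \<theta>))" for \<theta>
  proof -
    define R1 where "R1 = Re (char N (\<xi> * cp p \<theta>))"
    define R2 where "R2 = Re (char N (\<xi> * sp p \<theta>))"
    have a1: "1 - R1 \<le> K * \<bar>\<xi>\<bar> powr \<alpha> * (cos \<theta>)\<^sup>2 + B"
    proof -
      have "\<bar>\<xi> * cp p \<theta>\<bar> powr \<alpha> = \<bar>\<xi>\<bar> powr \<alpha> * (cos \<theta>)\<^sup>2"
        unfolding \<alpha>_def abs_mult powr_mult abs_cp_powr[OF p] ..
      thus ?thesis using H[of "\<xi> * cp p \<theta>"] unfolding R1_def \<alpha>_def by (simp add: algebra_simps)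
    qed
    have a2: "1 - R2 \<le> K * \<bar>\<xi>\<bar> powr \<alpha> * (sin \<theta>)\<^sup>2 + B"
    proof -
      have "\<bar>\<xi> * sp p \<theta>\<bar> powr \<alpha> = \<bar>\<xi>\<bar> powr \<alpha> * (sin \<theta>)\<^sup>2"
        unfolding \<alpha>_def abs_mult powr_mult abs_sp_powr[OF p] ..
      thus ?thesis using H[of "\<xi> * sp p \<theta>"] unfolding R2_def \<alpha>_def by (simp add: algebra_simps)
    qed
    have r1: "R1 \<le> 1" unfolding R1_def by (rule Nd.Re_char_le_1)
    have r2: "R2 \<le> 1" unfolding R2_def by (rule Nd.Re_char_le_1)
    have "0 \<le> (1 - R1) * (1 - R2)" using r1 r2 by simp
    hence "1 - (1 - R1) - (1 - R2) \<le> R1 * R2" by (simp add: algebra_simps)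
    moreover have "K * \<bar>\<xi>\<bar> powr \<alpha> * (cos \<theta>)\<^sup>2 + K * \<bar>\<xi>\<bar> powr \<alpha> * (sin \<theta>)\<^sup>2 = K * \<bar>\<xi>\<bar> powr \<alpha>"
      by (simp add: distrib_left[symmetric])
    ultimately have "c \<le> R1 * R2" unfolding c_def using a1 a2 by linarith
    thus ?thesis unfolding R1_def R2_def by simp
  qed
  have hc: "((\<lambda>\<theta>. 2 * c) has_integral (2 * pi * (2 * c))) {0..2*pi}"
    using has_integral_const_real[of "2*c" 0 "2*pi"] by simp
  have "2 * pi * (2 * c) \<le> 2 * Re I"
    by (rule has_integral_le[OF hc hR]) (use pw in auto)
  hence "c \<le> Re I / (2 * pi)" by (simp add: field_simps)
  thus ?thesis unfolding c_def \<alpha>_def I_def f_def by simp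
qed



definition exc :: "(real \<Rightarrow> real measure) \<Rightarrow> real \<Rightarrow> real \<Rightarrow> real \<Rightarrow> real \<Rightarrow> real" where
  "exc \<mu> K a s \<xi> = 1 - Re (char (\<mu> s) \<xi>) - K * \<bar>\<xi>\<bar> powr a"

definition gainI :: "real \<Rightarrow> (real \<Rightarrow> real measure) \<Rightarrow> real \<Rightarrow> real \<Rightarrow> complex" where
  "gainI p \<mu> t \<xi> = complex_of_real (1 / (2 * pi)) *
              integral {0..2*pi} (\<lambda>\<theta>. char (\<mu> t) (\<xi> * cp p \<theta>) * char (\<mu> t) (\<xi> * sp p \<theta>))"

lemma kac_deriv_Re:
  assumes "kac_solution p \<mu>0 \<mu>" "\<tau> > 0"
  shows "((\<lambda>s. Re (char (\<mu> s) \<xi>)) has_real_derivative (Re (gainI p \<mu> \<tau> \<xi>) - Re (char (\<mu> \<tau>) \<xi>))) (at \<tau>)"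
proof -
  have "((\<lambda>s. char (\<mu> s) \<xi>) has_vector_derivative (gainI p \<mu> \<tau> \<xi> - char (\<mu> \<tau>) \<xi>)) (at \<tau>)"
    using assms unfolding kac_solution_def gainI_def by blast
  from has_field_derivative_Re[OF this] show ?thesis by simp
qed

lemma kac_cont_Re:
  assumes kac: "kac_solution p \<mu>0 \<mu>" and t: "0 \<le> t0" "t0 < s"
  shows "continuous_on {t0..s} (\<lambda>\<tau>. Re (char (\<mu> \<tau>) \<xi>))"
proof -
  have "continuous (at \<tau> within {t0..s}) (\<lambda>\<tau>. Re (char (\<mu> \<tau>) \<xi>))" if "\<tau> \<in> {t0..s}" for \<tau>
  proof (cases "\<tau> > 0")
    case True
    have "isCont (\<lambda>\<tau>. Re (char (\<mu> \<tau>) \<xi>)) \<tau>"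
      by (rule DERIV_isCont[OF kac_deriv_Re[OF kac True]])
    thus ?thesis by (rule continuous_at_imp_continuous_within)
  next
    case False
    hence "\<tau> = 0" "t0 = 0" using that t by auto
    have lim: "((\<lambda>s. char (\<mu> s) \<xi>) \<longlongrightarrow> char \<mu>0 \<xi>) (at_right 0)" and m0: "\<mu> 0 = \<mu>0"
      using kac unfolding kac_solution_def by auto
    have "((\<lambda>\<tau>. Re (char (\<mu> \<tau>) \<xi>)) \<longlongrightarrow> Re (char (\<mu> 0) \<xi>)) (at_right 0)"
      using tendsto_Re[OF lim] m0 by simp
    moreover have "at 0 within {0..s} = at_right 0" using t \<open>t0 = 0\<close> by (intro at_within_Icc_at_right) auto
    ultimately show ?thesis unfolding continuous_within \<open>\<tau> = 0\<close> \<open>t0 = 0\<close> by simp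
  qed
  thus ?thesis by (simp add: continuous_on_eq_continuous_within)
qed

lemma step_lemma:
  assumes p: "p > 0" and kac: "kac_solution p \<mu>0 \<mu>" and B: "B \<ge> 0" and t0: "t0 \<ge> 0"
    and H0: "\<And>\<xi>. exc \<mu> K (2 / (1 + p)) t0 \<xi> \<le> 0"
    and HB: "\<And>s \<xi>. s \<in> {t0..t0 + 1/8} \<Longrightarrow> exc \<mu> K (2 / (1 + p)) s \<xi> \<le> B"
    and s: "s \<in> {t0..t0 + 1/8}"
  shows "exc \<mu> K (2 / (1 + p)) s \<xi> \<le> 3/4 * B"
proof (cases "s = t0")
  case True thus ?thesis using H0[of \<xi>] B by simp
next
  case False
  hence ts: "t0 < s" using s by simp
  define \<alpha> where "\<alpha> = 2 / (1 + p)"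
  define g where "g \<tau> = exp \<tau> * exc \<mu> K \<alpha> \<tau> \<xi>" for \<tau>
  define g' where "g' \<tau> = exp \<tau> * exc \<mu> K \<alpha> \<tau> \<xi> + exp \<tau> * (- (Re (gainI p \<mu> \<tau> \<xi>) - Re (char (\<mu> \<tau>) \<xi>)))" for \<tau>
  have dg: "(g has_real_derivative g' \<tau>) (at \<tau>)" if "\<tau> > 0" for \<tau>
  proof -
    have "((\<lambda>\<tau>. 1 - Re (char (\<mu> \<tau>) \<xi>) - K * \<bar>\<xi>\<bar> powr \<alpha>) has_real_derivative
        (0 - (Re (gainI p \<mu> \<tau> \<xi>) - Re (char (\<mu> \<tau>) \<xi>)) - 0)) (at \<tau>)"
      by (intro DERIV_diff DERIV_const kac_deriv_Re[OF kac that])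
    hence d1: "((\<lambda>\<tau>. exc \<mu> K \<alpha> \<tau> \<xi>) has_real_derivative
        (- (Re (gainI p \<mu> \<tau> \<xi>) - Re (char (\<mu> \<tau>) \<xi>)))) (at \<tau>)"
      unfolding exc_def by simp
    show ?thesis unfolding g_def
      by (rule DERIV_cong[OF DERIV_mult[OF DERIV_exp d1]]) (simp add: g'_def algebra_simps)
  qed
  have cg: "continuous_on {t0..s} g"
    unfolding g_def exc_def
    by (intro continuous_intros kac_cont_Re[OF kac t0 ts])
  obtain l z where z: "t0 < z" "z < s" and dz: "DERIV g z :> l" and eq: "g s - g t0 = (s - t0) * l"
    using MVT[OF ts cg] dg t0 by (metis less_le_trans order.strict_trans1 real_differentiable_def)
  have zpos: "z > 0" using z t0 by simp
  have l: "l = g' z" using DERIV_unique[OF dz dg[OF zpos]] .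
  have Nz: "real_distribution (\<mu> z)" using kac zpos unfolding kac_solution_def by auto
  have zs: "z \<in> {t0..t0+1/8}" using z s by auto
  have gb: "1 - K * \<bar>\<xi>\<bar> powr \<alpha> - 2 * B \<le> Re (gainI p \<mu> z \<xi>)"
    unfolding gainI_def \<alpha>_def
    by (rule gain_bound[OF p Nz B]) (use HB[OF zs] in \<open>simp add: exc_def\<close>)
  have "g' z = exp z * (1 - K * \<bar>\<xi>\<bar> powr \<alpha> - Re (gainI p \<mu> z \<xi>))"
    unfolding g'_def exc_def by (simp add: algebra_simps)
  also have "\<dots> \<le> exp z * (2 * B)"
    using gb by (intro mult_left_mono) auto
  also have "\<dots> \<le> exp (t0 + 1/8) * (2 * B)"
    using zs B by (intro mult_right_mono) auto
  finally have lb: "l \<le> exp (t0 + 1/8) * (2 * B)" using l by simp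
  have gt0: "g t0 \<le> 0" unfolding g_def using H0[of \<xi>] by (simp add: \<alpha>_def mult_nonneg_nonpos)
  have "g s \<le> (s - t0) * l" using eq gt0 by simp
  also have "\<dots> \<le> (1/8) * (exp (t0 + 1/8) * (2 * B))"
  proof -
    have "(s - t0) * l \<le> (s - t0) * (exp (t0 + 1/8) * (2 * B))"
      using lb ts by (intro mult_left_mono) auto
    also have "\<dots> \<le> (1/8) * (exp (t0 + 1/8) * (2 * B))"
      using s B by (intro mult_right_mono) auto
    finally show ?thesis .
  qed
  finally have "exp s * exc \<mu> K \<alpha> s \<xi> \<le> B / 4 * exp (t0 + 1/8)" unfolding g_def by simp
  hence "exc \<mu> K \<alpha> s \<xi> \<le> B / 4 * (exp (t0 + 1/8) / exp s)"
    by (simp add: field_simps)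
  also have "exp (t0 + 1/8) / exp s \<le> 3"
  proof -
    have "exp (t0 + 1/8) / exp s = exp (t0 + 1/8 - s)" by (simp add: exp_diff)
    also have "\<dots> \<le> exp 1" using ts by simp
    also have "\<dots> \<le> 3" by (rule exp_le)
    finally show ?thesis .
  qed
  hence "B / 4 * (exp (t0 + 1/8) / exp s) \<le> B / 4 * 3" using B by (intro mult_left_mono) auto
  finally show ?thesis unfolding \<alpha>_def by simp
qed



lemma strip_zero:
  assumes p: "p > 0" and kac: "kac_solution p \<mu>0 \<mu>" and K: "K \<ge> 0" and t0: "t0 \<ge> 0"
    and H0: "\<And>\<xi>. exc \<mu> K (2 / (1 + p)) t0 \<xi> \<le> 0"
    and s: "s \<in> {t0..t0 + 1/8}"
  shows "exc \<mu> K (2 / (1 + p)) s \<xi> \<le> 0"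
proof -
  have bnd: "\<forall>s\<in>{t0..t0 + 1/8}. \<forall>\<xi>. exc \<mu> K (2 / (1 + p)) s \<xi> \<le> 2 * (3/4)^k" for k
  proof (induction k)
    case 0
    show ?case
    proof (intro ballI allI)
      fix s \<xi> assume s: "s \<in> {t0..t0 + 1/8}"
      have "real_distribution (\<mu> s)" using kac s t0 unfolding kac_solution_def by auto
      hence "- 1 \<le> Re (char (\<mu> s) \<xi>)" by (rule real_distribution.Re_char_ge)
      moreover have "0 \<le> K * \<bar>\<xi>\<bar> powr (2 / (1 + p))" using K by simp
      ultimately show "exc \<mu> K (2 / (1 + p)) s \<xi> \<le> 2 * (3/4)^0" unfolding exc_def by simp
    qed
  next
    case (Suc k)
    show ?case
    proof (intro ballI allI)
      fix s \<xi> assume s: "s \<in> {t0..t0 + 1/8}"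
      have "exc \<mu> K (2 / (1 + p)) s \<xi> \<le> 3/4 * (2 * (3/4)^k)"
        by (rule step_lemma[OF p kac _ t0 H0 _ s]) (use Suc.IH in auto)
      thus "exc \<mu> K (2 / (1 + p)) s \<xi> \<le> 2 * (3/4)^Suc k" by simp
    qed
  qed
  show ?thesis
  proof (rule ccontr)
    assume "\<not> ?thesis"
    hence e: "exc \<mu> K (2 / (1 + p)) s \<xi> / 2 > 0" by simp
    obtain k where "(3/4::real)^k < exc \<mu> K (2 / (1 + p)) s \<xi> / 2"
      using real_arch_pow_inv[OF e, of "3/4"] by auto
    moreover have "exc \<mu> K (2 / (1 + p)) s \<xi> \<le> 2 * (3/4)^k" using bnd[of k] s by blast
    ultimately show False by simp
  qed
qed

lemma all_zero:
  assumes p: "p > 0" and kac: "kac_solution p \<mu>0 \<mu>" and K: "K \<ge> 0"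
    and init: "\<And>\<xi>. exc \<mu> K (2 / (1 + p)) 0 \<xi> \<le> 0"
    and t: "t \<ge> 0"
  shows "exc \<mu> K (2 / (1 + p)) t \<xi> \<le> 0"
proof -
  have ind: "\<forall>s\<in>{0..real n / 8}. \<forall>\<xi>. exc \<mu> K (2 / (1 + p)) s \<xi> \<le> 0" for n
  proof (induction n)
    case 0 thus ?case using init by simp
  next
    case (Suc n)
    show ?case
    proof (intro ballI allI)
      fix s \<xi> assume s: "s \<in> {0..real (Suc n) / 8}"
      show "exc \<mu> K (2 / (1 + p)) s \<xi> \<le> 0"
      proof (cases "s \<le> real n / 8")
        case True thus ?thesis using Suc.IH s by auto
      next
        case False
        have H0: "exc \<mu> K (2 / (1 + p)) (real n / 8) \<eta> \<le> 0" for \<eta> using Suc.IH by auto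
        show ?thesis
          by (rule strip_zero[OF p kac K _ H0]) (use s False in \<open>auto simp: field_simps\<close>)
      qed
    qed
  qed
  obtain n where "8 * t \<le> real n" using real_arch_simple by blast
  thus ?thesis using ind[of n] t by auto
qed

theorem proposition3:
  fixes p :: real and \<mu>0 :: "real measure" and \<mu> :: "real \<Rightarrow> real measure"
  assumes "p > 0"
    and "real_distribution \<mu>0"
    and "kac_solution p \<mu>0 \<mu>"
    and "Limsup at_top (\<lambda>x. ereal (x powr (2 / (1 + p)) * (1 - sym_cdf \<mu>0 x))) < \<infinity>"
  shows "\<forall>\<epsilon>>0. \<exists>a b. a \<le> b \<and> (INF t\<in>{0..}. measure (\<mu> t) {a..b}) > 1 - \<epsilon>"
proof -
  note p = assms(1) and M0 = assms(2) and kac = assms(3) and lim = assms(4)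
  define \<alpha> where "\<alpha> = 2 / (1 + p)"
  have a0: "0 < \<alpha>" "\<alpha> < 2" unfolding \<alpha>_def using p by (auto simp: field_simps)
  obtain K where K: "K \<ge> 0" and K0: "\<And>\<xi>. 1 - Re (char \<mu>0 \<xi>) \<le> K * \<bar>\<xi>\<bar> powr \<alpha>"
    using init_bound[OF M0 a0] lim unfolding \<alpha>_def by blast
  have m0: "\<mu> 0 = \<mu>0" and dist: "\<And>t. t \<ge> 0 \<Longrightarrow> real_distribution (\<mu> t)"
    using kac unfolding kac_solution_def by auto
  have allK: "1 - Re (char (\<mu> t) \<xi>) \<le> K * \<bar>\<xi>\<bar> powr \<alpha>" if "t \<ge> 0" for t \<xi>
  proof -
    have "exc \<mu> K (2 / (1 + p)) t \<xi> \<le> 0"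
      by (rule all_zero[OF p kac K _ that]) (use K0 m0 in \<open>simp add: exc_def \<alpha>_def\<close>)
    thus ?thesis unfolding exc_def \<alpha>_def by simp
  qed
  show ?thesis
  proof (intro allI impI)
    fix \<epsilon> :: real assume e: "\<epsilon> > 0"
    obtain u where u: "u > 0" and uK: "2 * K * u powr \<alpha> \<le> \<epsilon> / 2"
    proof (cases "K = 0")
      case True thus ?thesis using that[of 1] e by simp
    next
      case False
      hence Kp: "K > 0" using K by simp
      define u where "u = (\<epsilon> / (4 * K)) powr (1 / \<alpha>)"
      have "u > 0" unfolding u_def using e Kp by simp
      moreover have "u powr \<alpha> = \<epsilon> / (4 * K)"
        unfolding u_def using a0 e Kp by (simp add: powr_powr)
      ultimately show ?thesis using that[of u] Kp by (simp add: field_simps)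
    qed
    have bound: "1 - \<epsilon> / 2 \<le> measure (\<mu> t) {-2/u..2/u}" if t: "t \<ge> 0" for t
    proof -
      interpret Md: real_distribution "\<mu> t" using dist[OF t] .
      have tb: "measure (\<mu> t) {x. abs x \<ge> 2 / u} \<le> 2 * K * u powr \<alpha>"
        by (rule tail_from_char[OF dist[OF t] u K]) (use a0 allK[OF t] in auto)
      have "UNIV - {-2/u..2/u} \<subseteq> {x. abs x \<ge> 2 / u}" by auto
      hence "measure (\<mu> t) (UNIV - {-2/u..2/u}) \<le> measure (\<mu> t) {x. abs x \<ge> 2 / u}"
        by (intro Md.finite_measure_mono) auto
      moreover have "measure (\<mu> t) (UNIV - {-2/u..2/u}) = 1 - measure (\<mu> t) {-2/u..2/u}"
        using Md.prob_compl[of "{-2/u..2/u}"] by simp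
      ultimately show ?thesis using tb uK by linarith
    qed
    have "1 - \<epsilon> / 2 \<le> (INF t\<in>{0..}. measure (\<mu> t) {-2/u..2/u})"
      by (rule cINF_greatest) (use bound in auto)
    moreover have "-2/u \<le> 2/u" using u by simp
    ultimately show "\<exists>a b. a \<le> b \<and> (INF t\<in>{0..}. measure (\<mu> t) {a..b}) > 1 - \<epsilon>"
      using e by (intro exI[of _ "-2/u"] exI[of _ "2/u"]) auto
  qed
qed


end
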